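(* The kernel of the linear map $\mathcal{D}(\Lambda_{n,d})\to\mathcal{D}(\Lambda_{n,d})$, $y\mapsto Xy$ (the action of $X$ on the left regular module), has dimension $n^2d$.
   Context: $k$ is an algebraically closed field; $n,d$ integers with $d\geqslant2$, $d\mid n$, $\mathrm{char}\,k\nmid n$; $q$ a primitive $d$-th root of unity. $\Lambda_{n,d}$ is the path algebra of the cyclic quiver with vertices $e_i$ and arrows $a_i:e_i\to e_{i+1}$ ($i\in\mathbb{Z}_n$) modulo all paths of length $d$; $\gamma_i^m=a_{i+m-1}\cdots a_i$. $\mathcal{D}(\Lambda_{n,d})$ is the Drinfel'd double of the Hopf algebra $\Lambda_{n,d}$; concretely it has basis $G^iX^j\gamma_\ell^m$ ($i,\ell\in\mathbb{Z}_n$, $0\leqslant j,m\leqslant d-1$) and is generated by $G,X,e_i,a_i$ with relations $G^n=1$, $X^d=0$, $GX=q^{-1}XG$, products of paths as in $\Lambda_{n,d}$, $\gamma_\ell^mG=q^{-m}G\gamma_\ell^m$, $\gamma_\ell^mX=q^{-m}X\gamma_{\ell+1}^m-q^{-m}(m)_q\gamma_{\ell+1}^{m-1}+q^{\ell+1-m}(m)_qG\gamma_{\ell+1}^{m-1}$, where $(m)_q=1+q+\cdots+q^{m-1}$. *)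

theory Defs
  imports Main "HOL-Computational_Algebra.Polynomial"
begin

definition qint :: "'k::field \<Rightarrow> nat \<Rightarrow> 'k" where
  "qint q m = (\<Sum>t<m. q ^ t)"

definition gam :: "nat \<Rightarrow> (nat \<Rightarrow> 'b::ring_1) \<Rightarrow> (nat \<Rightarrow> 'b) \<Rightarrow> nat \<Rightarrow> nat \<Rightarrow> 'b" where
  "gam n e a l m = (if m = 0 then e (l mod n)
     else prod_list (map (\<lambda>t. a ((l + t) mod n)) (rev [0..<m])))"

end

theory Submission
  imports Defs
begin

theorem mainTheorem10:
  fixes emb :: "'k::field \<Rightarrow> 'b::ring_1"
    and n d :: nat and q :: 'k
    and G X :: 'b and e a :: "nat \<Rightarrow> 'b"
  assumes alg_closed: "\<forall>p::'k poly. 0 < degree p \<longrightarrow> (\<exists>x. poly p x = 0)"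
    and emb_one: "emb 1 = 1"
    and emb_add: "\<And>x y. emb (x + y) = emb x + emb y"
    and emb_mult: "\<And>x y. emb (x * y) = emb x * emb y"
    and emb_central: "\<And>x y. emb x * y = y * emb x"
    and d_ge: "d \<ge> 2" and d_dvd: "d dvd n" and char: "of_nat n \<noteq> (0::'k)"
    and q_prim: "q ^ d = 1" "\<And>j. 0 < j \<Longrightarrow> j < d \<Longrightarrow> q ^ j \<noteq> 1"
    and rel_G: "G ^ n = 1"
    and rel_X: "X ^ d = 0"
    and rel_GX: "G * X = emb (inverse q) * X * G"
    and rel_unit: "(\<Sum>l<n. e l) = 1"
    and rel_paths: "\<And>l l' m m'. l < n \<Longrightarrow> l' < n \<Longrightarrow> m < d \<Longrightarrow> m' < d \<Longrightarrow>
        gam n e a l m * gam n e a l' m' =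
          (if l = (l' + m') mod n \<and> m + m' < d then gam n e a l' (m + m') else 0)"
    and rel_pathlen: "\<And>l. l < n \<Longrightarrow> gam n e a l d = 0"
    and rel_gamG: "\<And>l m. l < n \<Longrightarrow> m < d \<Longrightarrow>
        gam n e a l m * G = emb (inverse q ^ m) * G * gam n e a l m"
    and rel_gamX: "\<And>l m. l < n \<Longrightarrow> m < d \<Longrightarrow>
        gam n e a l m * X =
          emb (inverse q ^ m) * X * gam n e a ((l + 1) mod n) m
          - emb (inverse q ^ m * qint q m) * gam n e a ((l + 1) mod n) (m - 1)
          + emb (q powi (int l + 1 - int m) * qint q m) * G * gam n e a ((l + 1) mod n) (m - 1)"
    and basis_inj: "inj_on (\<lambda>(i, j, l, m). G ^ i * X ^ j * gam n e a l m)
        ({..<n} \<times> {..<d} \<times> {..<n} \<times> {..<d})"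
    and basis_indep: "\<not> module.dependent (\<lambda>c y. emb c * y)
        ((\<lambda>(i, j, l, m). G ^ i * X ^ j * gam n e a l m) ` ({..<n} \<times> {..<d} \<times> {..<n} \<times> {..<d}))"
    and basis_span: "module.span (\<lambda>c y. emb c * y)
        ((\<lambda>(i, j, l, m). G ^ i * X ^ j * gam n e a l m) ` ({..<n} \<times> {..<d} \<times> {..<n} \<times> {..<d})) = UNIV"
  shows "vector_space.dim (\<lambda>c y. emb c * y) {y. X * y = 0} = n ^ 2 * d"
proof -
  interpret V: vector_space "\<lambda>c y. emb c * y"
    by unfold_locales (simp_all only: distrib_left distrib_right emb_add emb_mult emb_one mult.assoc mult_1_left)
  define \<phi> where "\<phi> = (\<lambda>(i::nat, j::nat, l::nat, m::nat). G ^ i * X ^ j * gam n e a l m)"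
  define I where "I = {..<n} \<times> {..<d} \<times> {..<n} \<times> {..<d}"
  define I0 where "I0 = {..<n} \<times> {..<d-1} \<times> {..<n} \<times> {..<d}"
  define I1 where "I1 = {..<n} \<times> {d-1} \<times> {..<n} \<times> {..<d}"
  have inj: "inj_on \<phi> I" using basis_inj unfolding \<phi>_def I_def .
  have indB: "V.independent (\<phi> ` I)" using basis_indep unfolding \<phi>_def I_def .
  have spB: "V.span (\<phi> ` I) = UNIV" using basis_span unfolding \<phi>_def I_def .
  have finI: "finite I" unfolding I_def by simp
  have I1I: "I1 \<subseteq> I" unfolding I1_def I_def using d_ge by auto
  have I0I: "I0 \<subseteq> I" unfolding I0_def I_def using d_ge by auto
  have q0: "q \<noteq> 0"
  proof
    assume "q = 0"
    then have "q ^ d = 0" using d_ge by simp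
    with q_prim(1) show False by simp
  qed
  have XG: "X * G = emb q * G * X"
  proof -
    have "emb q * G * X = emb q * (G * X)" by (rule mult.assoc)
    also have "\<dots> = emb q * (emb (inverse q) * X * G)" by (simp only: rel_GX)
    also have "\<dots> = (emb q * emb (inverse q)) * X * G" by (simp only: mult.assoc)
    also have "\<dots> = emb (q * inverse q) * X * G" by (simp only: emb_mult)
    also have "\<dots> = X * G" using q0 by (simp add: emb_one)
    finally show ?thesis by (rule sym)
  qed
  have XGi: "X * G ^ i = emb (q ^ i) * G ^ i * X" for i
  proof (induction i)
    case 0 then show ?case by (simp add: emb_one)
  next
    case (Suc i)
    have "X * G ^ Suc i = (X * G ^ i) * G" by (simp only: power_Suc2 mult.assoc)
    also have "\<dots> = emb (q ^ i) * G ^ i * (X * G)" unfolding Suc by (simp only: mult.assoc)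
    also have "\<dots> = emb (q ^ i) * G ^ i * (emb q * G * X)" unfolding XG by (rule refl)
    also have "\<dots> = emb (q ^ i) * (G ^ i * emb q) * G * X" by (simp only: mult.assoc)
    also have "\<dots> = emb (q ^ i) * (emb q * G ^ i) * G * X" by (simp only: emb_central[of q])
    also have "\<dots> = (emb (q ^ i) * emb q) * (G ^ i * G) * X" by (simp only: mult.assoc)
    also have "\<dots> = emb (q ^ Suc i) * G ^ Suc i * X" by (simp only: emb_mult power_Suc2)
    finally show ?case .
  qed
  have Xphi: "X * \<phi> (i, j, l, m) = emb (q ^ i) * \<phi> (i, Suc j, l, m)" for i j l m
  proof -
    have "X * \<phi> (i, j, l, m) = (X * G ^ i) * X ^ j * gam n e a l m" by (simp add: \<phi>_def mult.assoc)
    also have "\<dots> = emb (q ^ i) * \<phi> (i, Suc j, l, m)" by (simp add: XGi \<phi>_def mult.assoc)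
    finally show ?thesis .
  qed
  have emb0: "emb 0 = 0"
  proof -
    have "emb 0 = emb 0 + emb 0" using emb_add[of 0 0] by simp
    then show ?thesis by simp
  qed
  have phid: "\<phi> (i, d, l, m) = 0" for i l m by (simp add: \<phi>_def rel_X)
  have indep: "\<forall>t\<in>J. w t = 0" if J: "J \<subseteq> I" and s: "(\<Sum>t\<in>J. emb (w t) * \<phi> t) = 0" for J w
  proof (rule ccontr)
    assume "\<not> (\<forall>t\<in>J. w t = 0)"
    then obtain t0 where t0: "t0 \<in> J" "w t0 \<noteq> 0" by blast
    have injJ: "inj_on \<phi> J" by (rule inj_on_subset[OF inj J])
    have finJ: "finite (\<phi> ` J)" using finI J finite_subset by (metis finite_imageI)
    have "V.independent (\<phi> ` J)" by (rule V.independent_mono[OF indB image_mono[OF J]])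
    moreover have "V.dependent (\<phi> ` J)"
    proof -
      define u where "u = (\<lambda>v. w (inv_into J \<phi> v))"
      have "(\<Sum>v\<in>\<phi> ` J. emb (u v) * v) = (\<Sum>t\<in>J. emb (u (\<phi> t)) * \<phi> t)"
        by (rule sum.reindex[OF injJ, unfolded comp_def])
      also have "\<dots> = (\<Sum>t\<in>J. emb (w t) * \<phi> t)"
        by (rule sum.cong) (simp_all add: u_def inv_into_f_f[OF injJ])
      finally have "(\<Sum>v\<in>\<phi> ` J. emb (u v) * v) = 0" using s by simp
      moreover have "u (\<phi> t0) \<noteq> 0" using t0 by (simp add: u_def inv_into_f_f[OF injJ])
      ultimately show ?thesis using V.dependent_finite[OF finJ] t0 by blast
    qed
    ultimately show False by blast
  qed
  show ?thesis
  proof (rule V.dim_unique[where B = "\<phi> ` I1"])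
    show "\<phi> ` I1 \<subseteq> {y. X * y = 0}"
    proof
      fix y assume "y \<in> \<phi> ` I1"
      then obtain i l m where y: "y = \<phi> (i, d - 1, l, m)" unfolding I1_def by auto
      have "Suc (d - 1) = d" using d_ge by simp
      then show "y \<in> {y. X * y = 0}" using y Xphi phid by simp
    qed
    show "V.independent (\<phi> ` I1)" by (rule V.independent_mono[OF indB image_mono[OF I1I]])
    show "card (\<phi> ` I1) = n ^ 2 * d"
    proof -
      have "card (\<phi> ` I1) = card I1" using inj I1I inj_on_subset card_image by blast
      also have "\<dots> = n ^ 2 * d" unfolding I1_def by (simp add: card_cartesian_product power2_eq_square)
      finally show ?thesis .
    qed
    show "{y. X * y = 0} \<subseteq> V.span (\<phi> ` I1)"
    proof
      fix y assume "y \<in> {y. X * y = 0}"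
      then have Xy: "X * y = 0" by simp
      have "y \<in> V.span (\<phi> ` I)" using spB by simp
      then obtain u where u: "y = (\<Sum>v\<in>\<phi> ` I. emb (u v) * v)"
        using V.span_finite[of "\<phi> ` I"] finI by auto
      define c where "c = u \<circ> \<phi>"
      have yc: "y = (\<Sum>t\<in>I. emb (c t) * \<phi> t)"
        using u sum.reindex[OF inj, of "\<lambda>v. emb (u v) * v"] by (simp add: c_def comp_def)
      define sh where "sh = (\<lambda>(i::nat, j::nat, l::nat, m::nat). (i, Suc j, l, m))"
      define w where "w = (\<lambda>(i::nat, j::nat, l::nat, m::nat). c (i, j - 1, l, m) * q ^ i)"
      have "X * y = (\<Sum>t\<in>I. X * (emb (c t) * \<phi> t))" using yc by (simp add: sum_distrib_left)
      also have "\<dots> = (\<Sum>t\<in>I. emb (c t) * (X * \<phi> t))"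
        by (rule sum.cong[OF refl]) (metis mult.assoc emb_central)
      also have "\<dots> = (\<Sum>t\<in>I. emb (w (sh t)) * \<phi> (sh t))"
      proof (rule sum.cong[OF refl])
        fix t assume "t \<in> I"
        obtain i j l m where t: "t = (i, j, l, m)" by (cases t) auto
        have sh: "sh t = (i, Suc j, l, m)" by (simp add: t sh_def)
        have wt: "w (sh t) = c t * q ^ i" unfolding sh by (simp add: t w_def)
        show "emb (c t) * (X * \<phi> t) = emb (w (sh t)) * \<phi> (sh t)"
          unfolding wt unfolding sh unfolding t Xphi by (simp only: emb_mult mult.assoc)
      qed
      also have "\<dots> = (\<Sum>t\<in>I0. emb (w (sh t)) * \<phi> (sh t))"
      proof (rule sum.mono_neutral_right[OF finI I0I], rule ballI)
        fix t assume "t \<in> I - I0"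
        obtain i j l m where t0: "t = (i, j, l, m)" by (cases t) auto
        have "j = d - 1" using \<open>t \<in> I - I0\<close> unfolding t0 I_def I0_def by auto
        then have t: "t = (i, d - 1, l, m)" using t0 by simp
        have "Suc (d - 1) = d" using d_ge by simp
        then show "emb (w (sh t)) * \<phi> (sh t) = 0" by (simp add: t sh_def phid emb0)
      qed
      also have "\<dots> = (\<Sum>t\<in>sh ` I0. emb (w t) * \<phi> t)"
      proof -
        have "inj_on sh I0" unfolding sh_def inj_on_def by auto
        then show ?thesis using sum.reindex[of sh I0 "\<lambda>t. emb (w t) * \<phi> t"] by (simp add: comp_def)
      qed
      finally have "(\<Sum>t\<in>sh ` I0. emb (w t) * \<phi> t) = 0" using Xy by simp
      moreover have "sh ` I0 \<subseteq> I" unfolding sh_def I0_def I_def by auto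
      ultimately have w0: "\<forall>t\<in>sh ` I0. w t = 0" using indep by blast
      have c0: "c t = 0" if "t \<in> I0" for t
      proof -
        obtain i j l m where t: "t = (i, j, l, m)" by (cases t) auto
        have "w (sh t) = 0" using w0 that by blast
        then show ?thesis using q0 by (simp add: t sh_def w_def)
      qed
      have "y = (\<Sum>t\<in>I1. emb (c t) * \<phi> t)"
      proof -
        have "(\<Sum>t\<in>I. emb (c t) * \<phi> t) = (\<Sum>t\<in>I1. emb (c t) * \<phi> t)"
        proof (rule sum.mono_neutral_right[OF finI I1I], rule ballI)
          fix t assume "t \<in> I - I1"
          then have "t \<in> I0" unfolding I_def I0_def I1_def by auto
          then show "emb (c t) * \<phi> t = 0" using c0 by (simp add: emb0)
        qed
        then show ?thesis using yc by simp
      qed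
      also have "\<dots> \<in> V.span (\<phi> ` I1)"
        by (intro V.span_sum V.span_scale V.span_base) auto
      finally show "y \<in> V.span (\<phi> ` I1)" .
    qed
  qed
qed

end
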